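(* Let $\vec r:\mathbb{Z}\to\mathbb{R}^3$ be a discrete centroaffine space curve with invariants $\kappa_n,\bar\kappa_n,\tau_n$, let $(\beta_n)$ be nonzero reals and $\vec r'_n=\beta_n\vec r_n$ with torsions $\tau'_n$. If $\tau_n=0$ and $\tau'_n=0$ for all $n$, then for all $n$ $$\frac{1}{\beta_{n+2}}=\kappa_n\frac{1}{\beta_{n-1}}-(\kappa_n+\bar\kappa_n)\frac{1}{\beta_n}+(1+\bar\kappa_n)\frac{1}{\beta_{n+1}},$$ equivalently $\frac{1}{\beta_{n+2}}-\frac{1}{\beta_{n+1}}=\bar\kappa_n\Big(\frac{1}{\beta_{n+1}}-\frac{1}{\beta_n}\Big)-\kappa_n\Big(\frac{1}{\beta_n}-\frac{1}{\beta_{n-1}}\Big)$.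
   Context: A discrete centroaffine space curve is a map $\vec r:\mathbb{Z}\to\mathbb{R}^3$ with $[\vec r_{k-1},\vec r_k,\vec r_{k+1}]\ne0$ for all $k$, where $\vec r_k=\vec r(k)$, $[\cdot,\cdot,\cdot]$ is the $3\times3$ determinant and $\vec t_k=\vec r_{k+1}-\vec r_k$. With $D_k=[\vec r_{k-1},\vec r_k,\vec r_{k+1}]$: $\kappa_k=\frac{[\vec r_k,\vec r_{k+1},\vec r_{k+2}]}{D_k}$, $\bar\kappa_k=\frac{[\vec r_{k+1},\vec t_{k-1},\vec t_{k+1}]}{D_k}$, $\tau_k=\frac{[\vec t_{k-1},\vec t_k,\vec t_{k+1}]}{D_k}$ (first/second centroaffine curvature and centroaffine torsion). *)

theory Defs
  imports "HOL-Analysis.Analysis"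
begin

definition bracket3 :: "real^3 \<Rightarrow> real^3 \<Rightarrow> real^3 \<Rightarrow> real" where
  "bracket3 a b c = det (vector [a, b, c] :: real^3^3)"

definition tvec :: "(int \<Rightarrow> real^3) \<Rightarrow> int \<Rightarrow> real^3" where
  "tvec r k = r (k + 1) - r k"

definition Dc :: "(int \<Rightarrow> real^3) \<Rightarrow> int \<Rightarrow> real" where
  "Dc r k = bracket3 (r (k - 1)) (r k) (r (k + 1))"

definition centroaffine_curve :: "(int \<Rightarrow> real^3) \<Rightarrow> bool" where
  "centroaffine_curve r \<longleftrightarrow> (\<forall>k. Dc r k \<noteq> 0)"

definition kappa :: "(int \<Rightarrow> real^3) \<Rightarrow> int \<Rightarrow> real" where
  "kappa r k = bracket3 (r k) (r (k + 1)) (r (k + 2)) / Dc r k"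

definition kappabar :: "(int \<Rightarrow> real^3) \<Rightarrow> int \<Rightarrow> real" where
  "kappabar r k = bracket3 (r (k + 1)) (tvec r (k - 1)) (tvec r (k + 1)) / Dc r k"

definition torsion :: "(int \<Rightarrow> real^3) \<Rightarrow> int \<Rightarrow> real" where
  "torsion r k = bracket3 (tvec r (k - 1)) (tvec r k) (tvec r (k + 1)) / Dc r k"

end

theory Submission
  imports Defs
begin

lemma br_exp: "bracket3 a b c =
   a$1*b$2*c$3 - a$1*b$3*c$2 - a$2*b$1*c$3 + a$2*b$3*c$1 + a$3*b$1*c$2 - a$3*b$2*c$1"
  unfolding bracket3_def by (simp add: det_3 vector_3)

lemma br_diff: "bracket3 (a1 - a0) (a2 - a1) (a3 - a2) =
  bracket3 a1 a2 a3 - bracket3 a0 a2 a3 + bracket3 a0 a1 a3 - bracket3 a0 a1 a2"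
  unfolding br_exp by (simp add: algebra_simps)

lemma br_kb: "bracket3 a2 (a1 - a0) (a3 - a2) = bracket3 a0 a2 a3 - bracket3 a1 a2 a3"
  unfolding br_exp by (simp add: algebra_simps)

lemma br_scale: "bracket3 (x *\<^sub>R a) (y *\<^sub>R b) (z *\<^sub>R c) = x*y*z * bracket3 a b c"
  unfolding br_exp by (simp add: algebra_simps)

theorem proposition6p3:
  fixes r :: "int \<Rightarrow> real^3" and \<beta> :: "int \<Rightarrow> real"
  assumes curve: "centroaffine_curve r"
    and beta_nz: "\<forall>n. \<beta> n \<noteq> 0"
    and tau0: "\<forall>n. torsion r n = 0"
    and tau0': "\<forall>n. torsion (\<lambda>k. \<beta> k *\<^sub>R r k) n = 0"
  shows "\<forall>n. 1 / \<beta> (n + 2) =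
            kappa r n * (1 / \<beta> (n - 1)) - (kappa r n + kappabar r n) * (1 / \<beta> n)
            + (1 + kappabar r n) * (1 / \<beta> (n + 1))"
proof
  fix n
  define a0 a1 a2 a3 where a0_def: "a0 = r (n-1)" and a1_def: "a1 = r n" and a2_def: "a2 = r (n+1)" and a3_def: "a3 = r (n+2)"
  define b0 b1 b2 b3 where b0_def: "b0 = \<beta> (n-1)" and b1_def: "b1 = \<beta> n" and b2_def: "b2 = \<beta> (n+1)" and b3_def: "b3 = \<beta> (n+2)"
  define P Q R D where P_def: "P = bracket3 a1 a2 a3" and Q_def: "Q = bracket3 a0 a2 a3"
     and R_def: "R = bracket3 a0 a1 a3" and D_def: "D = bracket3 a0 a1 a2"
  have nz: "b0 \<noteq> 0" "b1 \<noteq> 0" "b2 \<noteq> 0" "b3 \<noteq> 0" using beta_nz by (auto simp: b0_def b1_def b2_def b3_def)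
  have D: "D \<noteq> 0" using curve unfolding centroaffine_curve_def Dc_def D_def a0_def a1_def a2_def
    by auto
  have e1: "n - 1 + 1 = n" "n + 1 + 1 = n + 2" by auto
  have "torsion r n = 0" using tau0 by auto
  hence T: "P - Q + R - D = 0" using D
    unfolding torsion_def tvec_def Dc_def e1
    by (simp add: br_diff P_def Q_def R_def D_def a0_def a1_def a2_def a3_def)
  have "torsion (\<lambda>k. \<beta> k *\<^sub>R r k) n = 0" using tau0' by auto
  moreover have "Dc (\<lambda>k. \<beta> k *\<^sub>R r k) n = b0*b1*b2*D"
    unfolding Dc_def by (simp add: br_scale D_def a0_def a1_def a2_def b0_def b1_def b2_def)
  ultimately have T': "b1*b2*b3*P - b0*b2*b3*Q + b0*b1*b3*R - b0*b1*b2*D = 0" using D nz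
    unfolding torsion_def tvec_def e1
    by (simp add: br_diff br_scale P_def Q_def R_def D_def a0_def a1_def a2_def a3_def
        b0_def b1_def b2_def b3_def)
  have K: "kappa r n = P / D"
    unfolding kappa_def Dc_def by (simp add: P_def D_def a0_def a1_def a2_def a3_def)
  have KB: "kappabar r n = (Q - P) / D"
    unfolding kappabar_def Dc_def tvec_def e1
    by (simp add: br_kb P_def Q_def D_def a0_def a1_def a2_def a3_def)
  have "1 / b3 = P/D * (1/b0) - (P/D + (Q-P)/D) * (1/b1) + (1 + (Q-P)/D) * (1/b2)"
    proof -
    have R: "R = D + Q - P" using T by simp
    have E: "b1*b2*b3*P - b0*b2*b3*Q + b0*b1*b3*(D + Q - P) - b0*b1*b2*D = 0" using T' R by simp
    have "D * (b1*b2*b3*P - b0*b2*b3*Q + b0*b1*b3*(D + Q - P) - b0*b1*b2*D) = 0" using E by simp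
    thus ?thesis using D nz R by (simp add: field_simps)
  qed
  thus "1 / \<beta> (n + 2) =
            kappa r n * (1 / \<beta> (n - 1)) - (kappa r n + kappabar r n) * (1 / \<beta> n)
            + (1 + kappabar r n) * (1 / \<beta> (n + 1))"
    using K KB by (simp add: b0_def b1_def b2_def b3_def)
qed

end
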